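(* Let $P$ be a countable multiset of primes, $G=\bigoplus_{p\in P}\mathbb{F}_p$, let $X$ be an ergodic $G$-system, let $F:X\to S^1$ be a phase polynomial of degree $<k$, and let $p$ be a prime with $p\geq k$. Suppose $F$ takes values in $C_{p^m}$ for some $m\in\mathbb{N}$. Then there is a constant $c\in S^1$ such that $cF$ takes values in $C_p$.
   Context: $C_r$ is the group of $r$-th roots of unity. A $G$-system is a compact metrizable probability space with measure-preserving $G$-action $(T_g)$; ergodic: only constants invariant. Phase polynomial of degree $<k$: $\Delta_{h_1}\cdots\Delta_{h_k}F=1$ a.e. for all $h_i\in G$, where $\Delta_h\phi=(\phi\circ T_h)/\phi$. *)

theory Defs
  imports "HOL-Probability.Probability"
begin

text \<open>The countable multiset of primes P is given by an index set I (a subset of nat,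
  hence countable) and a labelling ps with ps i prime for i in I; repetitions allowed.
  The group G = direct sum over i in I of F_(ps i) is modelled as finitely supported
  functions g :: nat => int with 0 <= g i < ps i on I and g i = 0 off I.\<close>

definition G_set :: "nat set \<Rightarrow> (nat \<Rightarrow> nat) \<Rightarrow> (nat \<Rightarrow> int) set" where
  "G_set I ps = {g. (\<forall>i. i \<notin> I \<longrightarrow> g i = 0) \<and> (\<forall>i\<in>I. 0 \<le> g i \<and> g i < int (ps i))
                    \<and> finite {i. g i \<noteq> 0}}"

definition G_add :: "(nat \<Rightarrow> nat) \<Rightarrow> (nat \<Rightarrow> int) \<Rightarrow> (nat \<Rightarrow> int) \<Rightarrow> (nat \<Rightarrow> int)" where
  "G_add ps g h = (\<lambda>i. (g i + h i) mod int (ps i))"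

definition G_system :: "nat set \<Rightarrow> (nat \<Rightarrow> nat) \<Rightarrow> 'a::metric_space measure
      \<Rightarrow> ((nat \<Rightarrow> int) \<Rightarrow> 'a \<Rightarrow> 'a) \<Rightarrow> bool" where
  "G_system I ps M T \<longleftrightarrow>
     compact (UNIV :: 'a set) \<and> prob_space M \<and> sets M = sets borel \<and> space M = UNIV \<and>
     (\<forall>g\<in>G_set I ps. T g \<in> measurable M M \<and> distr M M (T g) = M) \<and>
     T (\<lambda>_. 0) = id \<and>
     (\<forall>g\<in>G_set I ps. \<forall>h\<in>G_set I ps. T (G_add ps g h) = T g \<circ> T h)"

definition ergodic :: "nat set \<Rightarrow> (nat \<Rightarrow> nat) \<Rightarrow> 'a::metric_space measure
      \<Rightarrow> ((nat \<Rightarrow> int) \<Rightarrow> 'a \<Rightarrow> 'a) \<Rightarrow> bool" where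
  "ergodic I ps M T \<longleftrightarrow>
     (\<forall>f :: 'a \<Rightarrow> complex. f \<in> borel_measurable M \<longrightarrow>
        (\<forall>g\<in>G_set I ps. AE x in M. f (T g x) = f x) \<longrightarrow> (\<exists>c. AE x in M. f x = c))"

definition Delta :: "((nat \<Rightarrow> int) \<Rightarrow> 'a \<Rightarrow> 'a) \<Rightarrow> (nat \<Rightarrow> int) \<Rightarrow> ('a \<Rightarrow> complex) \<Rightarrow> 'a \<Rightarrow> complex" where
  "Delta T h \<phi> = (\<lambda>x. \<phi> (T h x) / \<phi> x)"

text \<open>Phase polynomial of degree < k: measurable F : X -> S^1 with
  Delta_{h_1} ... Delta_{h_k} F = 1 a.e. for all h_1,...,h_k in G.\<close>

definition phase_poly :: "nat set \<Rightarrow> (nat \<Rightarrow> nat) \<Rightarrow> 'a::metric_space measure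
      \<Rightarrow> ((nat \<Rightarrow> int) \<Rightarrow> 'a \<Rightarrow> 'a) \<Rightarrow> nat \<Rightarrow> ('a \<Rightarrow> complex) \<Rightarrow> bool" where
  "phase_poly I ps M T k F \<longleftrightarrow>
     F \<in> borel_measurable M \<and> (\<forall>x\<in>space M. cmod (F x) = 1) \<and>
     (\<forall>hs. length hs = k \<longrightarrow> set hs \<subseteq> G_set I ps \<longrightarrow>
        (AE x in M. foldr (Delta T) hs F x = 1))"

end

theory Submission
  imports Defs
begin


lemma choose_pm1:
  fixes p :: nat assumes "prime p" "j < p"
  shows "int p dvd (int ((p - 1) choose j) - (-1) ^ j)"
  using assms(2)
proof (induction j)
  case 0 then show ?case by simp
next
  case (Suc j)
  have p: "p = Suc (p - 1)" using assms(1) prime_gt_0_nat by simp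
  have "Suc (p - 1) choose (Suc j) = ((p - 1) choose j) + ((p - 1) choose (Suc j))"
    by (rule binomial_Suc_Suc)
  then have pc: "p choose (Suc j) = ((p - 1) choose j) + ((p - 1) choose (Suc j))"
    using p by simp
  have "p dvd p choose Suc j"
    using dvd_choose_prime[of "Suc j" p] Suc.prems assms(1) by simp
  then have "int p dvd int ((p - 1) choose j) + int ((p - 1) choose Suc j)"
    unfolding pc of_nat_add[symmetric] int_dvd_int_iff .
  moreover have "int p dvd (int ((p - 1) choose j) - (-1) ^ j)" using Suc by simp
  ultimately have "int p dvd (int ((p - 1) choose j) + int ((p - 1) choose Suc j))
      - (int ((p - 1) choose j) - (-1) ^ j)" by (rule dvd_diff)
  then show ?case by (simp add: algebra_simps)
qed
lemma exponent_cong: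
  fixes p :: nat assumes "prime p" "j \<le> p - 1"
  shows "\<exists>t. (-1) ^ (p - 1 - j) * int ((p - 1) choose j) = 1 + int p * t"
proof -
  have p0: "p > 0" using assms(1) prime_gt_0_nat by blast
  have jp: "j < p" using assms(2) p0 by linarith
  obtain s where s: "int ((p - 1) choose j) - (-1) ^ j = int p * s"
    using choose_pm1[OF assms(1) jp] by (elim dvdE) blast
  have pj: "p - 1 - j + j = p - 1" using jp by linarith
  have e: "(-1::int) ^ (p - 1 - j) * (-1) ^ j = (-1) ^ (p - 1)"
    unfolding power_add[symmetric] pj ..
  have "\<exists>t. (-1::int) ^ (p - 1) = 1 + int p * t"
  proof (cases "p = 2")
    case True then show ?thesis by (intro exI[of _ "-1"]) simp
  next
    case False
    then have "p > 2" using prime_ge_2_nat[OF assms(1)] by linarith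
    then have "odd p" using assms(1) prime_odd_nat by blast
    then have "even (p - 1)" using p0 by simp
    then show ?thesis by (intro exI[of _ 0]) simp
  qed
  then obtain t where t: "(-1::int) ^ (p - 1) = 1 + int p * t" by blast
  define a where "a = (-1::int) ^ (p - 1 - j)"
  define b where "b = (-1::int) ^ j"
  have s': "int ((p - 1) choose j) = b + int p * s" using s unfolding b_def by linarith
  have "a * int ((p - 1) choose j) = a * b + int p * (a * s)"
    unfolding s' by (simp add: distrib_left)
  also have "\<dots> = 1 + int p * (t + a * s)"
    using e t unfolding a_def b_def by (simp add: distrib_left)
  finally show ?thesis unfolding a_def by blast
qed


lemma root_powi:
  fixes w :: complex and p :: nat
  assumes "w ^ p = 1" "p > 0"
  shows "w powi (1 + int p * t) = w"
proof -
  have w0: "w \<noteq> 0" using assms by (metis power_0_left less_not_refl zero_neq_one gr0_conv_Suc)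
  have "w powi (1 + int p * t) = w powi 1 * (w powi int p) powi t"
    using w0 by (simp add: power_int_add power_int_mult)
  also have "\<dots> = w" using assms by (simp add: power_int_of_nat)
  finally show ?thesis .
qed


lemma delta_binom:
  assumes nz: "\<forall>x. f x \<noteq> 0"
  shows "foldr (Delta T) (replicate n h) f x =
    (\<Prod>j\<le>n. f ((T h ^^ j) x) powi ((-1) ^ (n - j) * int (n choose j)))"
proof (induction n arbitrary: x)
  case 0 then show ?case by simp
next
  case (Suc n)
  define e where "e n j = ((-1::int) ^ (n - j) * int (n choose j))" for n j
  define a where "a j = f ((T h ^^ j) x)" for j
  have anz: "a j \<noteq> 0" for j using nz by (simp add: a_def)
  have A: "(\<Prod>j\<le>n. f ((T h ^^ j) (T h x)) powi e n j)
      = (\<Prod>j\<le>Suc n. a j powi (if j = 0 then 0 else e n (j - 1)))"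
    by (simp add: prod.atMost_Suc_shift a_def funpow_Suc_right del: prod.atMost_Suc funpow.simps)
  have B: "(\<Prod>j\<le>n. f ((T h ^^ j) x) powi e n j) = (\<Prod>j\<le>Suc n. a j powi e n j)"
    by (simp add: a_def e_def binomial_eq_0)
  have C: "(if j = 0 then 0 else e n (j - 1)) - e n j = e (Suc n) j" if "j \<le> Suc n" for j
  proof (cases j)
    case 0 then show ?thesis by (simp add: e_def)
  next
    case (Suc i)
    show ?thesis
    proof (cases "i = n")
      case True then show ?thesis using Suc by (simp add: e_def)
    next
      case False
      then have "i < n" using Suc that by simp
      then have "n - i = Suc (n - Suc i)" by simp
      then show ?thesis using Suc by (simp add: e_def algebra_simps)
    qed
  qed
  have "foldr (Delta T) (replicate (Suc n) h) f x
      = foldr (Delta T) (replicate n h) f (T h x) / foldr (Delta T) (replicate n h) f x"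
    by (simp add: Delta_def)
  also have "\<dots> = (\<Prod>j\<le>Suc n. a j powi (if j = 0 then 0 else e n (j - 1))) / (\<Prod>j\<le>Suc n. a j powi e n j)"
    using Suc[of "T h x"] Suc[of x] A B by (simp add: e_def)
  also have "\<dots> = (\<Prod>j\<le>Suc n. a j powi (if j = 0 then 0 else e n (j - 1)) / a j powi e n j)"
    by (simp add: prod_dividef)
  also have "\<dots> = (\<Prod>j\<le>Suc n. a j powi e (Suc n) j)"
  proof (rule prod.cong)
    fix j assume "j \<in> {..Suc n}"
    then show "a j powi (if j = 0 then 0 else e n (j - 1)) / a j powi e n j = a j powi e (Suc n) j"
      using anz[of j] C[of j] power_int_diff[of "a j", symmetric] by simp
  qed simp
  finally show ?case by (simp add: a_def e_def)
qed

lemma nth_root_ex: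
  fixes c :: complex assumes "c \<noteq> 0" "n > 0" shows "\<exists>z. z ^ n = c"
proof -
  have "card {z::complex. z ^ n = c} = n" using card_nth_roots assms by blast
  then have "{z::complex. z ^ n = c} \<noteq> {}" using assms by (metis card.empty less_irrefl)
  then show ?thesis by auto
qed



definition ng :: "(nat \<Rightarrow> nat) \<Rightarrow> nat \<Rightarrow> (nat \<Rightarrow> int) \<Rightarrow> nat \<Rightarrow> int" where
  "ng ps n g = (\<lambda>i. (int n * g i) mod int (ps i))"

lemma foldr_rep_Suc:
  "foldr (Delta T) (replicate (Suc n) h) f = foldr (Delta T) (replicate n h) (Delta T h f)"
  by (induction n) auto

lemma telescope:
  fixes F :: "'a \<Rightarrow> complex"
  assumes "\<forall>x. F x \<noteq> 0"
  shows "(\<Prod>j<n. F (S ((S ^^ j) x)) / F ((S ^^ j) x)) = F ((S ^^ n) x) / F x"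
  using prod_lessThan_telescope[of n "\<lambda>j. F ((S ^^ j) x)"] assms by simp

locale B9sys =
  fixes I :: "nat set" and ps :: "nat \<Rightarrow> nat"
    and M :: "'a::metric_space measure" and T :: "(nat \<Rightarrow> int) \<Rightarrow> 'a \<Rightarrow> 'a"
  assumes prim: "\<forall>i\<in>I. prime (ps i)"
    and sys: "G_system I ps M T"
    and erg: "ergodic I ps M T"
begin

lemma ps_pos: "i \<in> I \<Longrightarrow> ps i > 0"
  using prim prime_gt_0_nat by blast

lemma prob: "prob_space M" using sys unfolding G_system_def by blast
lemma spaceM: "space M = UNIV" using sys unfolding G_system_def by blast

lemma Tmeas: "g \<in> G_set I ps \<Longrightarrow> T g \<in> measurable M M"
  using sys unfolding G_system_def by blast
lemma Tdistr: "g \<in> G_set I ps \<Longrightarrow> distr M M (T g) = M"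
  using sys unfolding G_system_def by blast

lemma AE_T:
  assumes "g \<in> G_set I ps" "AE x in M. P x"
  shows "AE x in M. P (T g x)"
proof -
  have "AE x in distr M M (T g). P x" unfolding Tdistr[OF assms(1)] by (rule assms(2))
  then show ?thesis by (rule AE_distrD[OF Tmeas[OF assms(1)]])
qed

lemma AE_ex:
  assumes "AE x in M. P x" shows "\<exists>x. P x"
proof (rule ccontr)
  assume "\<not> (\<exists>x. P x)"
  then have "AE x in M. False" using assms by (auto elim: eventually_mono)
  then show False using prob_space.AE_False[OF prob] by simp
qed

lemma ng_in:
  assumes "g \<in> G_set I ps" shows "ng ps n g \<in> G_set I ps"
proof -
  have "{i. ng ps n g i \<noteq> 0} \<subseteq> {i. g i \<noteq> 0}" by (auto simp: ng_def)
  moreover have "finite {i. g i \<noteq> 0}" using assms by (simp add: G_set_def)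
  ultimately have "finite {i. ng ps n g i \<noteq> 0}" by (rule finite_subset)
  moreover have "\<forall>i. i \<notin> I \<longrightarrow> ng ps n g i = 0" using assms by (simp add: G_set_def ng_def)
  moreover have "\<forall>i\<in>I. 0 \<le> ng ps n g i \<and> ng ps n g i < int (ps i)"
    using ps_pos by (simp add: ng_def)
  ultimately show ?thesis by (simp add: G_set_def)
qed

lemma ng_Suc: "ng ps (Suc n) g = G_add ps g (ng ps n g)"
  by (rule ext) (simp add: ng_def G_add_def mod_add_right_eq algebra_simps)

lemma T_ng:
  assumes "g \<in> G_set I ps" shows "T (ng ps n g) = T g ^^ n"
proof (induction n)
  case 0
  have "ng ps 0 g = (\<lambda>_. 0)" by (simp add: ng_def)
  then show ?case using sys by (simp add: G_system_def)
next
  case (Suc n)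
  have "T (ng ps (Suc n) g) = T g \<circ> T (ng ps n g)"
    unfolding ng_Suc using sys assms ng_in[OF assms] by (simp add: G_system_def)
  then show ?case using Suc by simp
qed

lemma AE_Tn:
  assumes "g \<in> G_set I ps" "AE x in M. P x"
  shows "AE x in M. P ((T g ^^ n) x)"
  using AE_T[OF ng_in[OF assms(1)] assms(2), of n] T_ng[OF assms(1)] by simp

lemma AE_D1:
  assumes "h \<in> G_set I ps" "AE x in M. f x = 1"
  shows "AE x in M. foldr (Delta T) (replicate n h) f x = 1"
proof (induction n)
  case 0 then show ?case using assms by simp
next
  case (Suc n)
  from AE_T[OF assms(1) Suc] Suc show ?case
    by eventually_elim (simp add: Delta_def)
qed

end

context B9sys begin

lemma order_p_lemma:
  fixes F :: "'a \<Rightarrow> complex" and p :: nat and lam :: complex and k :: nat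
  assumes pp: "prime p" and kp: "Suc k \<le> p"
    and Fpp: "phase_poly I ps M T (Suc k) F"
    and hG: "h \<in> G_set I ps" and hp: "T h ^^ p = id"
    and lam: "AE x in M. Delta T h F x ^ p = lam"
  shows "lam = 1"
proof -
  have p0: "p > 0" using pp prime_gt_0_nat by blast
  have p2: "p \<ge> 2" using pp prime_ge_2_nat by blast
  have Fnz: "\<forall>x. F x \<noteq> 0"
    using Fpp spaceM unfolding phase_poly_def by (metis UNIV_I norm_zero zero_neq_one)
  define S where "S = T h"
  define U where "U = Delta T h F"
  have U_eq: "U y = F (S y) / F y" for y by (simp add: U_def S_def Delta_def)
  have Unz: "U y \<noteq> 0" for y using Fnz U_eq by simp
  have lam0: "lam \<noteq> 0"
  proof -
    obtain x where "U x ^ p = lam" using AE_ex[OF lam] U_def by auto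
    then show ?thesis using Unz[of x] by auto
  qed
  obtain mu where mu: "mu ^ p = lam" using nth_root_ex[OF lam0 p0] by blast
  have mu0: "mu \<noteq> 0" using mu lam0 p0 by auto
  define w where "w y = U y / mu" for y
  have wnz: "\<forall>y. w y \<noteq> 0" using Unz mu0 by (simp add: w_def)
  have Dw: "Delta T h w = Delta T h U"
    by (rule ext) (simp add: Delta_def w_def mu0)
  have D1: "AE x in M. foldr (Delta T) (replicate (Suc k) h) F x = 1"
  proof -
    have "\<forall>hs. length hs = Suc k \<longrightarrow> set hs \<subseteq> G_set I ps \<longrightarrow> (AE x in M. foldr (Delta T) hs F x = 1)"
      using Fpp unfolding phase_poly_def by blast
    moreover have "set (replicate (Suc k) h) \<subseteq> G_set I ps" using hG by (simp del: replicate_Suc)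
    ultimately show ?thesis by (metis length_replicate)
  qed
  have "AE x in M. foldr (Delta T) (replicate (p - Suc k) h) (foldr (Delta T) (replicate (Suc k) h) F) x = 1"
    by (rule AE_D1[OF hG D1])
  moreover have "replicate p h = replicate (p - Suc k) h @ replicate (Suc k) h"
    using kp by (metis replicate_add le_add_diff_inverse2)
  ultimately have Dp: "AE x in M. foldr (Delta T) (replicate p h) F x = 1" by simp
  have pS: "p = Suc (Suc (p - 2))" using p2 by simp
  have "foldr (Delta T) (replicate p h) F = foldr (Delta T) (replicate (p - 1) h) w"
  proof -
    have "foldr (Delta T) (replicate p h) F = foldr (Delta T) (replicate (Suc (p - 2)) h) U"
      by (subst pS) (simp only: foldr_rep_Suc U_def)
    also have "\<dots> = foldr (Delta T) (replicate (p - 2) h) (Delta T h U)" by (simp only: foldr_rep_Suc)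
    also have "\<dots> = foldr (Delta T) (replicate (Suc (p - 2)) h) w" by (simp only: foldr_rep_Suc Dw)
    also have "Suc (p - 2) = p - 1" using p2 by simp
    finally show ?thesis .
  qed
  with Dp have Dw1: "AE x in M. foldr (Delta T) (replicate (p - 1) h) w x = 1" by simp
  have Ush: "AE x in M. \<forall>j\<in>{..p - 1}. U ((S ^^ j) x) ^ p = lam"
    unfolding eventually_ball_finite_distrib[OF finite_atMost]
    using AE_Tn[OF hG lam] by (simp add: U_def S_def)
  from Dw1 Ush have "AE x in M. lam = 1"
  proof eventually_elim
    case (elim x)
    have wp: "w ((S ^^ j) x) ^ p = 1" if "j \<le> p - 1" for j
      using elim(2) that mu mu0 lam0 by (simp add: w_def power_divide)
    have "1 = (\<Prod>j\<le>p - 1. w ((S ^^ j) x) powi ((-1) ^ (p - 1 - j) * int ((p - 1) choose j)))"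
      using elim(1) delta_binom[OF wnz, of T "p - 1" h x] by (simp add: S_def)
    also have "\<dots> = (\<Prod>j\<le>p - 1. w ((S ^^ j) x))"
    proof (rule prod.cong)
      fix j assume j: "j \<in> {..p - 1}"
      then have jle: "j \<le> p - 1" by simp
      obtain t where t: "(-1) ^ (p - 1 - j) * int ((p - 1) choose j) = 1 + int p * t"
        using exponent_cong[OF pp jle] by blast
      show "w ((S ^^ j) x) powi ((-1) ^ (p - 1 - j) * int ((p - 1) choose j)) = w ((S ^^ j) x)"
        unfolding t by (rule root_powi[OF wp[OF jle] p0])
    qed simp
    finally have w1': "1 = (\<Prod>j\<le>p - 1. w ((S ^^ j) x))" .
    have pset: "{..<p} = {..p - 1}" using p0 by auto
    have w1: "(\<Prod>j<p. w ((S ^^ j) x)) = 1" unfolding pset using w1' by simp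
    have "1 = F ((S ^^ p) x) / F x" using hp Fnz by (simp add: S_def)
    also have "\<dots> = (\<Prod>j<p. U ((S ^^ j) x))"
      using telescope[OF Fnz, where S=S and n=p and x=x] by (simp add: U_eq)
    also have "\<dots> = (\<Prod>j<p. mu * w ((S ^^ j) x))"
      using mu0 by (simp add: w_def)
    also have "\<dots> = mu ^ p * (\<Prod>j<p. w ((S ^^ j) x))"
      by (simp add: prod.distrib)
    also have "\<dots> = lam" using w1 mu by simp
    finally show ?case by simp
  qed
  then show ?thesis using AE_ex by blast
qed

end

context B9sys begin

lemma lam_coprime:
  fixes lam :: complex and r q :: nat
  assumes "lam ^ r = 1" "lam ^ q = 1" "coprime r q" "r \<noteq> 0"
  shows "lam = 1"
proof -
  obtain x y where xy: "r * x = q * y + gcd r q" using bezout_nat[OF assms(4)] by blast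
  then have "r * x = q * y + 1" using assms(3) by simp
  then have "lam ^ (r * x) = lam ^ (q * y) * lam" by (simp add: power_add)
  then show ?thesis using assms(1,2) by (simp add: power_mult)
qed

lemma main_ind:
  fixes p m :: nat
  assumes pp: "prime p"
  shows "phase_poly I ps M T k F \<Longrightarrow> k \<le> p \<Longrightarrow> (AE x in M. F x ^ (p ^ m) = 1)
     \<Longrightarrow> \<exists>c. AE x in M. F x ^ p = c"
proof (induction k arbitrary: F)
  case 0
  have "\<forall>hs. length hs = 0 \<longrightarrow> set hs \<subseteq> G_set I ps \<longrightarrow> (AE x in M. foldr (Delta T) hs F x = 1)"
    using 0 unfolding phase_poly_def by blast
  then have "AE x in M. F x = 1" by (metis foldr.simps(1) id_apply list.size(3) empty_set empty_subsetI)
  then have "AE x in M. F x ^ p = 1" by (auto elim: eventually_mono)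
  then show ?case by blast
next
  case (Suc k)
  have p0: "p > 0" using pp prime_gt_0_nat by blast
  have Fmeas: "F \<in> borel_measurable M" using Suc.prems unfolding phase_poly_def by blast
  have Fn1: "cmod (F x) = 1" for x
    using Suc.prems spaceM unfolding phase_poly_def by blast
  have Fnz: "\<forall>x. F x \<noteq> 0" using Fn1 by (metis norm_zero zero_neq_one)
  have Fpp: "\<forall>hs. length hs = Suc k \<longrightarrow> set hs \<subseteq> G_set I ps \<longrightarrow> (AE x in M. foldr (Delta T) hs F x = 1)"
    using Suc.prems unfolding phase_poly_def by blast
  define u where "u g = Delta T g F" for g
  have u_eq: "u g y = F (T g y) / F y" for g y by (simp add: u_def Delta_def)
  have unz: "u g y \<noteq> 0" for g y using Fnz u_eq by simp
  have upp: "phase_poly I ps M T k (u g)" if g: "g \<in> G_set I ps" for g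
  proof -
    have "u g \<in> borel_measurable M"
    proof -
      have "(\<lambda>y. F (T g y)) \<in> borel_measurable M"
        using measurable_comp[OF Tmeas[OF g] Fmeas] by (simp add: comp_def)
      then show ?thesis unfolding u_eq[abs_def] using Fmeas by measurable
    qed
    moreover have "\<forall>x\<in>space M. cmod (u g x) = 1" using Fn1 by (simp add: u_eq norm_divide)
    moreover have "AE x in M. foldr (Delta T) hs (u g) x = 1"
      if "length hs = k" "set hs \<subseteq> G_set I ps" for hs
    proof -
      have "foldr (Delta T) hs (u g) = foldr (Delta T) (hs @ [g]) F" by (simp add: u_def)
      moreover have "length (hs @ [g]) = Suc k" "set (hs @ [g]) \<subseteq> G_set I ps" using that g by auto
      ultimately show ?thesis using Fpp by metis
    qed
    ultimately show ?thesis unfolding phase_poly_def by blast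
  qed
  have upm: "AE x in M. u g x ^ (p ^ m) = 1" if g: "g \<in> G_set I ps" for g
    using AE_T[OF g Suc.prems(3)] Suc.prems(3)
    by eventually_elim (simp add: u_eq power_divide)
  have "\<forall>g\<in>G_set I ps. \<exists>c. AE x in M. u g x ^ p = c"
    using Suc.IH upp upm Suc.prems(2) by simp
  then obtain lam where lam: "\<And>g. g \<in> G_set I ps \<Longrightarrow> AE x in M. u g x ^ p = lam g"
    by metis
  have lam_pm: "lam g ^ (p ^ m) = 1" if g: "g \<in> G_set I ps" for g
  proof -
    from lam[OF g] upm[OF g] have "AE x in M. lam g ^ (p ^ m) = 1"
      by eventually_elim (metis power_mult mult.commute power_one)
    then show ?thesis using AE_ex by blast
  qed
  have ordp: "lam h = 1" if h: "h \<in> G_set I ps" and hp: "T h ^^ p = id" for h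
    using order_p_lemma[OF pp Suc.prems(2) Suc.prems(1) h hp] lam[OF h] by (simp add: u_def)
  have lam_pow: "lam (ng ps n g) = lam g ^ n" if g: "g \<in> G_set I ps" for g n
  proof -
    have "AE x in M. \<forall>j\<in>{..<n}. u g ((T g ^^ j) x) ^ p = lam g"
      unfolding eventually_ball_finite_distrib[OF finite_lessThan]
      using AE_Tn[OF g lam[OF g]] by simp
    with lam[OF ng_in[OF g, of n]] have "AE x in M. lam (ng ps n g) = lam g ^ n"
    proof eventually_elim
      case (elim x)
      have "u (ng ps n g) x = F ((T g ^^ n) x) / F x" by (simp add: u_eq T_ng[OF g])
      also have "\<dots> = (\<Prod>j<n. u g ((T g ^^ j) x))"
        using telescope[OF Fnz, where S="T g" and n=n and x=x] by (simp add: u_eq)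
      finally have "lam (ng ps n g) = (\<Prod>j<n. u g ((T g ^^ j) x)) ^ p" using elim(1) by simp
      also have "\<dots> = (\<Prod>j<n. u g ((T g ^^ j) x) ^ p)" by (simp add: prod_power_distrib)
      also have "\<dots> = (\<Prod>j<n. lam g)" using elim(2) by simp
      finally show ?case by simp
    qed
    then show ?thesis using AE_ex by blast
  qed
  have lam1: "lam g = 1" if g: "g \<in> G_set I ps" for g
  proof -
    define S' where "S' = {i. g i \<noteq> 0 \<and> ps i \<noteq> p}"
    define r where "r = (\<Prod>i\<in>S'. ps i)"
    have finS: "finite S'"
      using g unfolding G_set_def S'_def by (auto intro: finite_subset)
    have S'I: "i \<in> I" if "i \<in> S'" for i using g that unfolding G_set_def S'_def by auto
    have r0: "r \<noteq> 0" unfolding r_def using finS S'I ps_pos by auto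
    define h where "h = ng ps r g"
    have hG: "h \<in> G_set I ps" unfolding h_def by (rule ng_in[OF g])
    have "ng ps p h = (\<lambda>_. 0)"
    proof
      fix i
      have e: "ng ps p h i = (int p * int r * g i) mod int (ps i)"
        by (simp add: ng_def h_def mod_mult_right_eq mult.assoc)
      show "ng ps p h i = 0"
      proof (cases "g i = 0")
        case True then show ?thesis using e by simp
      next
        case False
        show ?thesis
        proof (cases "ps i = p")
          case True then show ?thesis using e by simp
        next
          case ne: False
          then have "i \<in> S'" using False by (simp add: S'_def)
          then have "ps i dvd r" unfolding r_def using finS by (auto intro: dvd_prodI)
          then have "int (ps i) dvd int p * int r * g i" by simp
          then show ?thesis using e by simp
        qed
      qed
    qed
    then have "T (ng ps p h) = id" using sys by (simp add: G_system_def)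
    then have "T h ^^ p = id" using T_ng[OF hG] by simp
    then have "lam h = 1" by (rule ordp[OF hG])
    then have A: "lam g ^ r = 1" using lam_pow[OF g] h_def by simp
    have "coprime r p" unfolding r_def
    proof (rule prod_coprime_left)
      fix i assume i: "i \<in> S'"
      then show "coprime (ps i) p"
        using primes_coprime[of "ps i" p] prim S'I[OF i] pp by (simp add: S'_def)
    qed
    then have "coprime r (p ^ m)" by simp
    then show ?thesis using lam_coprime[OF A lam_pm[OF g] _ r0] by simp
  qed
  have inv: "AE x in M. F (T g x) ^ p = F x ^ p" if g: "g \<in> G_set I ps" for g
  proof -
    have "AE x in M. u g x ^ p = 1" using lam[OF g] lam1[OF g] by simp
    then show ?thesis by eventually_elim (use Fnz in \<open>simp add: u_eq power_divide\<close>)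
  qed
  have "(\<lambda>x. F x ^ p) \<in> borel_measurable M" using Fmeas by measurable
  then show ?case using erg inv unfolding ergodic_def by blast
qed

theorem final:
  fixes F :: "'a \<Rightarrow> complex" and k p m :: nat
  assumes "phase_poly I ps M T k F"
    and "prime p" and "p \<ge> k"
    and "AE x in M. F x ^ (p ^ m) = 1"
  shows "\<exists>c. cmod c = 1 \<and> (AE x in M. (c * F x) ^ p = 1)"
proof -
  obtain c0 where c0: "AE x in M. F x ^ p = c0"
    using main_ind[OF assms(2) assms(1) assms(3) assms(4)] by blast
  have p0: "p > 0" using assms(2) prime_gt_0_nat by blast
  have Fn1: "cmod (F x) = 1" for x
    using assms(1) spaceM unfolding phase_poly_def by blast
  obtain x where "F x ^ p = c0" using AE_ex[OF c0] by blast
  then have nc0: "cmod c0 = 1" using Fn1[of x] by (metis norm_power power_one)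
  then have c00: "inverse c0 \<noteq> 0" by auto
  obtain c where c: "c ^ p = inverse c0" using nth_root_ex[OF c00 p0] by blast
  have "cmod c ^ p = 1" using c nc0 by (metis norm_power norm_inverse inverse_1)
  then have nc: "cmod c = 1" using p0 power_eq_imp_eq_base[of "cmod c" p 1] by simp
  have "AE x in M. (c * F x) ^ p = 1"
    using c0
  proof eventually_elim
    case (elim x)
    have c0nz: "c0 \<noteq> 0" using nc0 by auto
    have "(c * F x) ^ p = inverse c0 * c0" using elim by (simp add: power_mult_distrib c)
    then show ?case using c0nz by simp
  qed
  with nc show ?thesis by blast
qed

end
theorem theoremB9:
  fixes I :: "nat set" and ps :: "nat \<Rightarrow> nat"
    and M :: "'a::metric_space measure" and T :: "(nat \<Rightarrow> int) \<Rightarrow> 'a \<Rightarrow> 'a"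
    and F :: "'a \<Rightarrow> complex" and k p m :: nat
  assumes "\<forall>i\<in>I. prime (ps i)"
    and "G_system I ps M T"
    and "ergodic I ps M T"
    and "phase_poly I ps M T k F"
    and "prime p" and "p \<ge> k"
    and "AE x in M. F x ^ (p ^ m) = 1"
  shows "\<exists>c. cmod c = 1 \<and> (AE x in M. (c * F x) ^ p = 1)"
proof -
  interpret B9sys I ps M T using assms(1-3) by unfold_locales
  show ?thesis using final assms(4-7) by blast
qed

end
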